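(* Let $\alpha_2\approx0.2797707433$ be the root in $[0,1]$ of $8\alpha^4-8\alpha^3+8\alpha^2=1/2$ and let $\alpha_2\le\alpha\le 1/3$. If $(x,y)\in A_2$ and $G_\alpha(x,y),G_\alpha^2(x,y)\in A_1$, then $G_\alpha^3(x,y)\in A_2$; i.e., a point coming from $A_2$ remains in $A_1$ for at most $2$ consecutive steps.
   Context: Let $\tau:[0,1]\to[0,1]$ be the symmetric tent map, $\tau(x)=2x$ for $0\le x<1/2$ and $\tau(x)=2-2x$ for $1/2\le x\le 1$. For $0<\alpha<1$ define $G_\alpha:[0,1]^2\to[0,1]^2$ by $G_\alpha(x,y)=(y,\tau(\alpha y+(1-\alpha)x))$. Let $S(x,y)=\alpha y+(1-\alpha)x$, $A_1=\{(x,y)\in[0,1]^2: S(x,y)<1/2\}$ and $A_2=\{(x,y)\in[0,1]^2: S(x,y)\ge 1/2\}$. *)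

theory Defs
  imports Complex_Main
begin

definition tent :: "real \<Rightarrow> real" where
  "tent x = (if x < 1/2 then 2 * x else 2 - 2 * x)"

definition S :: "real \<Rightarrow> real \<times> real \<Rightarrow> real" where
  "S \<alpha> p = \<alpha> * snd p + (1 - \<alpha>) * fst p"

definition G :: "real \<Rightarrow> real \<times> real \<Rightarrow> real \<times> real" where
  "G \<alpha> p = (snd p, tent (S \<alpha> p))"

definition unit_square :: "(real \<times> real) set" where
  "unit_square = {p. 0 \<le> fst p \<and> fst p \<le> 1 \<and> 0 \<le> snd p \<and> snd p \<le> 1}"

definition A1 :: "real \<Rightarrow> (real \<times> real) set" where
  "A1 \<alpha> = {p \<in> unit_square. S \<alpha> p < 1/2}"

definition A2 :: "real \<Rightarrow> (real \<times> real) set" where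
  "A2 \<alpha> = {p \<in> unit_square. S \<alpha> p \<ge> 1/2}"

end

theory Submission
  imports Defs
begin

lemma fmono:
  fixes a b :: real
  assumes "0 \<le> b" "b \<le> a" "a \<le> 1/3"
  shows "8*b^4 - 8*b^3 + 8*b^2 \<le> 8*a^4 - 8*a^3 + 8*a^2"
proof -
  have e: "(8*a^4 - 8*a^3 + 8*a^2) - (8*b^4 - 8*b^3 + 8*b^2)
     = (a-b) * (8*(a^3+a^2*b+a*b^2+b^3) + 8*((a+b) - (a^2+a*b+b^2)))"
    by (simp add: algebra_simps power2_eq_square power3_eq_cube power4_eq_xxxx)
  have r1: "a*a \<le> a*(1/3)" using assms by (intro mult_left_mono) auto
  have r2: "b*b \<le> b*(1/3)" using assms by (intro mult_left_mono) auto
  have r3: "b*a \<le> (1/3)*a" using assms by (intro mult_right_mono) auto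
  have "a^2 \<le> a/3" "b^2 \<le> b/3" "a*b \<le> a/3" using r1 r2 r3
    by (simp_all add: power2_eq_square mult.commute)
  then have "(a+b) - (a^2+a*b+b^2) \<ge> 0" using assms by linarith
  moreover have "a^3+a^2*b+a*b^2+b^3 \<ge> 0" using assms by simp
  ultimately have "0 \<le> (a-b) * (8*(a^3+a^2*b+a*b^2+b^3) + 8*((a+b) - (a^2+a*b+b^2)))"
    using assms by (intro mult_nonneg_nonneg) auto
  then show ?thesis using e by linarith
qed

theorem proposition10:
  fixes \<alpha> \<alpha>\<^sub>2 x y :: real
  assumes "0 \<le> \<alpha>\<^sub>2" and "\<alpha>\<^sub>2 \<le> 1"
    and "8 * \<alpha>\<^sub>2 ^ 4 - 8 * \<alpha>\<^sub>2 ^ 3 + 8 * \<alpha>\<^sub>2 ^ 2 = 1/2"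
    and "\<alpha>\<^sub>2 \<le> \<alpha>" and "\<alpha> \<le> 1/3"
    and "(x, y) \<in> A2 \<alpha>"
    and "G \<alpha> (x, y) \<in> A1 \<alpha>"
    and "(G \<alpha> ^^ 2) (x, y) \<in> A1 \<alpha>"
  shows "(G \<alpha> ^^ 3) (x, y) \<in> A2 \<alpha>"
proof -
  define a where "a = \<alpha>"
  have fa: "8*a^4 - 8*a^3 + 8*a^2 \<ge> 1/2" using fmono[of \<alpha>\<^sub>2 a] assms a_def by simp
  have a0: "0 \<le> a" using assms a_def by simp
  have a1: "a \<le> 1/3" using assms a_def by simp
  define S0 where "S0 = a*y + (1-a)*x"
  define z1 where "z1 = 2 - 2*S0"
  have h0: "0 \<le> x" "x \<le> 1" "0 \<le> y" "y \<le> 1" "S0 \<ge> 1/2"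
    using assms(6) by (auto simp: A2_def unit_square_def S_def S0_def a_def)
  have G1: "G \<alpha> (x,y) = (y, z1)"
    using h0 by (simp add: G_def tent_def S_def S0_def z1_def a_def)
  define S1 where "S1 = a*z1 + (1-a)*y"
  have h1: "0 \<le> z1" "z1 \<le> 1" "S1 < 1/2"
    using assms(7) by (auto simp: G1 A1_def unit_square_def S_def S1_def a_def)
  have S1p: "0 \<le> S1" using h1 h0 a0 a1 by (simp add: S1_def)
  define z2 where "z2 = 2*S1"
  have G2: "(G \<alpha> ^^ 2) (x,y) = (z1, z2)"
  proof -
    have "(G \<alpha> ^^ 2) (x,y) = G \<alpha> (G \<alpha> (x,y))" by (simp add: numeral_2_eq_2)
    also have "\<dots> = G \<alpha> (y, z1)" by (simp only: G1)
    finally show ?thesis using h1 S1p by (simp add: G_def tent_def S_def S1_def z2_def a_def)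
  qed
  define S2 where "S2 = a*z2 + (1-a)*z1"
  have h2: "S2 < 1/2"
    using assms(8) by (auto simp: G2 A1_def unit_square_def S_def S2_def a_def)
  have S2p: "0 \<le> S2" using h1 S1p a0 a1 by (simp add: S2_def z2_def)
  define z3 where "z3 = 2*S2"
  have G3: "(G \<alpha> ^^ 3) (x,y) = (z2, z3)"
  proof -
    have "(G \<alpha> ^^ 3) (x,y) = G \<alpha> ((G \<alpha> ^^ 2) (x,y))"
      by (simp add: numeral_3_eq_3 numeral_2_eq_2)
    then show ?thesis using h2 by (simp add: G2 G_def tent_def S_def S2_def z3_def a_def)
  qed
  define S3 where "S3 = a*z3 + (1-a)*z2"
  have eS3: "S3 = (4*a^2+2-2*a)*S1 + 2*a*(1-a)*z1"
    by (simp add: S3_def z3_def S2_def z2_def algebra_simps power2_eq_square)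
  have z1lb: "z1 \<ge> 2*a*(1-y)"
  proof -
    have "(1-a)*x \<le> (1-a)" using h0 a1 by (simp add: mult_left_le)
    then show ?thesis using z1_def S0_def by (simp add: algebra_simps)
  qed
  define c1 where "c1 = (4*a^2+2-2*a)*a + 2*a*(1-a)"
  define c2 where "c2 = (4*a^2+2-2*a)*(1-a)"
  have eS3': "S3 = c1*z1 + c2*y"
    by (simp add: eS3 c1_def c2_def S1_def algebra_simps)
  have q: "4*a^2+2-2*a \<ge> 3/2" proof -
    have "0 \<le> (2*a-1/2)^2" by simp
    moreover have "(2*a-1/2)^2 = 4*a^2 - 2*a + 1/4" by (simp add: power2_eq_square algebra_simps)
    ultimately show ?thesis by linarith
  qed
  have c1p: "c1 \<ge> 0" proof -
    have "0 \<le> (4*a^2+2-2*a)*a" using q a0 by (intro mult_nonneg_nonneg) auto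
    moreover have "0 \<le> 2*a*(1-a)" using a0 a1 by simp
    ultimately show ?thesis unfolding c1_def by linarith
  qed
  have c2b: "c2 \<ge> 1/2"
  proof -
    have "(3/2)*(2/3) \<le> (4*a^2+2-2*a)*(1-a)"
      using q a1 by (intro mult_mono) auto
    then show ?thesis by (simp add: c2_def)
  qed
  have "c1*z1 \<ge> c1*(2*a*(1-y))" using c1p z1lb by (simp add: mult_left_mono)
  moreover have "c1*(2*a) = 8*a^4 - 8*a^3 + 8*a^2"
    by (simp add: c1_def algebra_simps power2_eq_square power3_eq_cube power4_eq_xxxx)
  moreover have "c1*(2*a*(1-y)) = (c1*(2*a))*(1-y)" by simp
  ultimately have "c1*z1 \<ge> (8*a^4 - 8*a^3 + 8*a^2)*(1-y)" by simp
  then have "S3 \<ge> (8*a^4 - 8*a^3 + 8*a^2)*(1-y) + c2*y"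
    using eS3' by linarith
  moreover have "(8*a^4 - 8*a^3 + 8*a^2)*(1-y) \<ge> (1/2)*(1-y)"
    using fa h0 by (intro mult_right_mono) auto
  moreover have "c2*y \<ge> (1/2)*y" using c2b h0 by (intro mult_right_mono) auto
  ultimately have "S3 \<ge> 1/2*(1-y) + 1/2*y" by linarith
  moreover have "1/2*(1-y) + 1/2*y = (1/2::real)" by (simp add: field_simps)
  ultimately have "S3 \<ge> 1/2" by linarith
  moreover have "0 \<le> z2" "z2 \<le> 1" "0 \<le> z3" "z3 \<le> 1"
    using S1p h1 S2p h2 by (auto simp: z2_def z3_def)
  ultimately show ?thesis
    by (simp add: G3 A2_def unit_square_def S_def S3_def a_def)
qed

end
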